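(* Let $d,r\in\mathbb{N}$, $n\geq 3$, and let $k$ be a nonnegative integer with $$k\leq \left(1+\binom{2(d+1)}{r-1}\right)^{-1}\left(\frac n2-1\right)-d-5.$$ Let $G$ and $H$ be graphs on $n$ vertices, each with average degree at most $d$. Suppose there are distinct vertices $u_1,\dots,u_{n-k}$ of $G$ and distinct vertices $w_1,\dots,w_{n-k}$ of $H$ such that $G-u_i\cong H-w_i$ for every $i\in[n-k]$. Then $G$ and $H$ contain the same number of cliques of size $r$. (That is, the number of $r$-cliques can be reconstructed from any deck missing at most the stated number of cards.)
   Context: All graphs are finite, simple and undirected. For a graph $G$ and $v\in V(G)$, the card $G-v$ is the graph obtained by deleting $v$ and all edges incident to it; the deck is the multiset of unlabelled cards. An $r$-clique is a set of $r$ pairwise adjacent vertices. The average degree of an $n$-vertex graph with $m$ edges is $2m/n$. *)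

theory Defs
  imports Complex_Main
begin

definition simple_graph :: "'a set \<Rightarrow> 'a set set \<Rightarrow> bool" where
  "simple_graph V E \<longleftrightarrow> finite V \<and> (\<forall>e\<in>E. e \<subseteq> V \<and> card e = 2)"

definition del_vert_V :: "'a set \<Rightarrow> 'a \<Rightarrow> 'a set" where
  "del_vert_V V v = V - {v}"

definition del_vert_E :: "'a set set \<Rightarrow> 'a \<Rightarrow> 'a set set" where
  "del_vert_E E v = {e \<in> E. v \<notin> e}"

definition graph_iso :: "'a set \<Rightarrow> 'a set set \<Rightarrow> 'b set \<Rightarrow> 'b set set \<Rightarrow> bool" where
  "graph_iso V1 E1 V2 E2 \<longleftrightarrow>
     (\<exists>f. bij_betw f V1 V2 \<and>
          (\<forall>x\<in>V1. \<forall>y\<in>V1. {x, y} \<in> E1 \<longleftrightarrow> {f x, f y} \<in> E2))"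

definition cliques :: "nat \<Rightarrow> 'a set \<Rightarrow> 'a set set \<Rightarrow> 'a set set" where
  "cliques r V E = {S. S \<subseteq> V \<and> card S = r \<and> (\<forall>x\<in>S. \<forall>y\<in>S. x \<noteq> y \<longrightarrow> {x, y} \<in> E)}"

definition avg_degree :: "'a set \<Rightarrow> 'a set set \<Rightarrow> real" where
  "avg_degree V E = 2 * real (card E) / real (card V)"

end

theory Submission
  imports Defs
begin


definition cdeg :: "nat \<Rightarrow> 'a set \<Rightarrow> 'a set set \<Rightarrow> 'a \<Rightarrow> nat" where
  "cdeg r V E x = card {S \<in> cliques r V E. x \<in> S}"

definition cnt :: "nat \<Rightarrow> 'a set \<Rightarrow> 'a set set \<Rightarrow> nat \<Rightarrow> nat" where
  "cnt r V E t = card {x \<in> V. t \<le> cdeg r V E x}"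

definition nb :: "'a set \<Rightarrow> 'a set set \<Rightarrow> 'a \<Rightarrow> 'a set" where
  "nb V E x = {y \<in> V. {x, y} \<in> E}"

definition edeg :: "'a set set \<Rightarrow> 'a \<Rightarrow> nat" where
  "edeg E x = card {e \<in> E. x \<in> e}"

definition Kset :: "nat \<Rightarrow> 'a set \<Rightarrow> 'a set set \<Rightarrow> 'a \<Rightarrow> 'a set" where
  "Kset r V E u = {x \<in> V. x \<noteq> u \<and> (\<exists>S\<in>cliques r V E. x \<in> S \<and> u \<in> S)}"

lemma cliques_finite: "finite V \<Longrightarrow> finite (cliques r V E)"
  by (rule finite_subset[of _ "Pow V"]) (auto simp: cliques_def)

lemma del_cliques:
  "cliques r (del_vert_V V u) (del_vert_E E u) = {S \<in> cliques r V E. u \<notin> S}"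
  unfolding cliques_def del_vert_V_def del_vert_E_def by auto

lemma card_del:
  assumes "finite V"
  shows "card (cliques r (del_vert_V V u) (del_vert_E E u)) = card (cliques r V E) - cdeg r V E u"
    and "cdeg r V E u \<le> card (cliques r V E)"
proof -
  have f: "finite (cliques r V E)" using assms by (rule cliques_finite)
  have "cliques r V E = {S \<in> cliques r V E. u \<notin> S} \<union> {S \<in> cliques r V E. u \<in> S}" by auto
  hence "card (cliques r V E) = card {S \<in> cliques r V E. u \<notin> S} + card {S \<in> cliques r V E. u \<in> S}"
    using f by (metis (no_types, lifting) card_Un_disjoint disjoint_iff finite_Un mem_Collect_eq)
  thus "card (cliques r (del_vert_V V u) (del_vert_E E u)) = card (cliques r V E) - cdeg r V E u"
    and "cdeg r V E u \<le> card (cliques r V E)"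
    by (simp_all add: del_cliques cdeg_def)
qed

lemma iso_cliques:
  assumes f: "bij_betw f V1 V2" and e: "\<forall>x\<in>V1. \<forall>y\<in>V1. {x, y} \<in> E1 \<longleftrightarrow> {f x, f y} \<in> E2"
  shows "cliques r V2 E2 = image f ` cliques r V1 E1"
proof
  have inj: "inj_on f V1" and im: "f ` V1 = V2" using f by (auto simp: bij_betw_def)
  show "image f ` cliques r V1 E1 \<subseteq> cliques r V2 E2"
  proof
    fix T assume "T \<in> image f ` cliques r V1 E1"
    then obtain S where S: "S \<in> cliques r V1 E1" and T: "T = f ` S" by auto
    have sub: "S \<subseteq> V1" using S by (auto simp: cliques_def)
    have "card T = card S" using T inj sub by (simp add: card_image inj_on_subset)
    moreover have "T \<subseteq> V2" using T sub im by auto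
    moreover have "\<forall>a\<in>T. \<forall>b\<in>T. a \<noteq> b \<longrightarrow> {a, b} \<in> E2"
      using S T e sub by (auto simp: cliques_def) (metis subsetD)
    ultimately show "T \<in> cliques r V2 E2" using S by (auto simp: cliques_def)
  qed
  show "cliques r V2 E2 \<subseteq> image f ` cliques r V1 E1"
  proof
    fix T assume T: "T \<in> cliques r V2 E2"
    define S where "S = {x \<in> V1. f x \<in> T}"
    have TV: "T \<subseteq> V2" using T by (auto simp: cliques_def)
    have fS: "f ` S = T" using TV im unfolding S_def by auto
    have sub: "S \<subseteq> V1" by (auto simp: S_def)
    have "card S = card T" using fS inj sub by (metis card_image inj_on_subset)
    moreover have "\<forall>x\<in>S. \<forall>y\<in>S. x \<noteq> y \<longrightarrow> {x, y} \<in> E1"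
    proof (intro ballI impI)
      fix x y assume "x \<in> S" "y \<in> S" "x \<noteq> y"
      hence "f x \<noteq> f y" "f x \<in> T" "f y \<in> T" "x \<in> V1" "y \<in> V1"
        using inj by (auto simp: S_def inj_on_def)
      thus "{x, y} \<in> E1" using T e by (auto simp: cliques_def)
    qed
    ultimately have "S \<in> cliques r V1 E1" using sub T by (auto simp: cliques_def)
    thus "T \<in> image f ` cliques r V1 E1" using fS by auto
  qed
qed

lemma iso_inv:
  assumes "graph_iso V1 E1 V2 E2"
  shows "card (cliques r V1 E1) = card (cliques r V2 E2)" and "cnt r V1 E1 t = cnt r V2 E2 t"
proof -
  obtain f where f: "bij_betw f V1 V2" and e: "\<forall>x\<in>V1. \<forall>y\<in>V1. {x, y} \<in> E1 \<longleftrightarrow> {f x, f y} \<in> E2"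
    using assms by (auto simp: graph_iso_def)
  have inj: "inj_on f V1" and im: "f ` V1 = V2" using f by (auto simp: bij_betw_def)
  have cl: "cliques r V2 E2 = image f ` cliques r V1 E1" by (rule iso_cliques[OF f e])
  have injP: "inj_on (image f) (cliques r V1 E1)"
    by (rule inj_on_subset[OF inj_on_image_Pow[OF inj]]) (auto simp: cliques_def)
  show "card (cliques r V1 E1) = card (cliques r V2 E2)"
    using cl injP by (simp add: card_image)
  have cd: "cdeg r V2 E2 (f x) = cdeg r V1 E1 x" if x: "x \<in> V1" for x
  proof -
    have "{S \<in> cliques r V2 E2. f x \<in> S} = image f ` {S \<in> cliques r V1 E1. x \<in> S}"
    proof -
      have "\<And>S. S \<in> cliques r V1 E1 \<Longrightarrow> (f x \<in> f ` S \<longleftrightarrow> x \<in> S)"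
        using inj x by (auto simp: cliques_def inj_on_def)
      thus ?thesis using cl by auto
    qed
    moreover have "inj_on (image f) {S \<in> cliques r V1 E1. x \<in> S}"
      using injP by (rule inj_on_subset) auto
    ultimately show ?thesis by (simp add: cdeg_def card_image)
  qed
  have "{y \<in> V2. t \<le> cdeg r V2 E2 y} = f ` {x \<in> V1. t \<le> cdeg r V1 E1 x}"
    using im cd by auto
  moreover have "inj_on f {x \<in> V1. t \<le> cdeg r V1 E1 x}" using inj by (rule inj_on_subset) auto
  ultimately show "cnt r V1 E1 t = cnt r V2 E2 t" by (simp add: cnt_def card_image)
qed

lemma graph_iso_sym:
  assumes "graph_iso V1 E1 V2 E2" shows "graph_iso V2 E2 V1 E1"
proof -
  obtain f where f: "bij_betw f V1 V2" and e: "\<forall>x\<in>V1. \<forall>y\<in>V1. {x, y} \<in> E1 \<longleftrightarrow> {f x, f y} \<in> E2"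
    using assms by (auto simp: graph_iso_def)
  let ?g = "inv_into V1 f"
  have g: "bij_betw ?g V2 V1" using f by (rule bij_betw_inv_into)
  have "\<forall>x\<in>V2. \<forall>y\<in>V2. {x, y} \<in> E2 \<longleftrightarrow> {?g x, ?g y} \<in> E1"
  proof (intro ballI)
    fix x y assume "x \<in> V2" "y \<in> V2"
    moreover have "\<And>z. z \<in> V2 \<Longrightarrow> ?g z \<in> V1 \<and> f (?g z) = z"
      using f by (meson bij_betw_apply bij_betw_inv_into_right g)
    ultimately show "{x, y} \<in> E2 \<longleftrightarrow> {?g x, ?g y} \<in> E1" using e by metis
  qed
  thus ?thesis using g by (auto simp: graph_iso_def)
qed


lemma cdeg_r0: "finite V \<Longrightarrow> cdeg 0 V E x = 0"
proof -
  assume f: "finite V"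
  have e: "{S \<in> cliques 0 V E. x \<in> S} = {}"
  proof (rule ccontr)
    assume "{S \<in> cliques 0 V E. x \<in> S} \<noteq> {}"
    then obtain S where "S \<subseteq> V" "card S = 0" "x \<in> S" by (auto simp: cliques_def)
    moreover have "finite S" using \<open>S \<subseteq> V\<close> f by (rule finite_subset)
    ultimately show False by simp
  qed
  show ?thesis unfolding cdeg_def e by simp
qed

lemma cdeg_r1: "x \<in> V \<Longrightarrow> cdeg 1 V E x = 1"
proof -
  assume x: "x \<in> V"
  have "{S \<in> cliques 1 V E. x \<in> S} = {{x}}"
  proof
    show "{S \<in> cliques 1 V E. x \<in> S} \<subseteq> {{x}}"
    proof
      fix S assume S: "S \<in> {S \<in> cliques 1 V E. x \<in> S}"
      hence "card S = 1" "x \<in> S" by (auto simp: cliques_def)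
      then obtain y where "S = {y}" by (metis card_1_singletonE)
      thus "S \<in> {{x}}" using \<open>x \<in> S\<close> by simp
    qed
    show "{{x}} \<subseteq> {S \<in> cliques 1 V E. x \<in> S}" using x by (simp add: cliques_def)
  qed
  thus ?thesis by (simp add: cdeg_def)
qed

lemma clique_nb:
  assumes "S \<in> cliques r V E" "x \<in> S" "finite V"
  shows "S - {x} \<subseteq> nb V E x" "card (S - {x}) = r - 1"
proof -
  have fin: "finite S" using assms by (auto simp: cliques_def intro: finite_subset)
  show "S - {x} \<subseteq> nb V E x" using assms by (auto simp: cliques_def nb_def)
  show "card (S - {x}) = r - 1" using assms fin by (auto simp: cliques_def)
qed

lemma cdeg_le_binom:
  assumes "finite V"
  shows "cdeg r V E x \<le> card (nb V E x) choose (r - 1)"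
proof -
  have "card {S \<in> cliques r V E. x \<in> S} \<le> card {B. B \<subseteq> nb V E x \<and> card B = r - 1}"
  proof (rule card_inj_on_le[where f = "\<lambda>S. S - {x}"])
    show "inj_on (\<lambda>S. S - {x}) {S \<in> cliques r V E. x \<in> S}"
      by (rule inj_onI) (metis (no_types, lifting) insert_Diff mem_Collect_eq)
    show "(\<lambda>S. S - {x}) ` {S \<in> cliques r V E. x \<in> S} \<subseteq> {B. B \<subseteq> nb V E x \<and> card B = r - 1}"
    proof
      fix B assume "B \<in> (\<lambda>S. S - {x}) ` {S \<in> cliques r V E. x \<in> S}"
      then obtain S where S: "S \<in> cliques r V E" "x \<in> S" and B: "B = S - {x}" by auto
      show "B \<in> {B. B \<subseteq> nb V E x \<and> card B = r - 1}"
        using clique_nb[OF S assms] B by simp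
    qed
    show "finite {B. B \<subseteq> nb V E x \<and> card B = r - 1}"
      using assms by (auto simp: nb_def)
  qed
  also have "\<dots> = card (nb V E x) choose (r - 1)"
    by (rule n_subsets) (use assms in \<open>auto simp: nb_def\<close>)
  finally show ?thesis by (simp add: cdeg_def)
qed

lemma nb_le_edeg:
  assumes "simple_graph V E"
  shows "card (nb V E x) \<le> edeg E x"
proof -
  have finE: "finite E" using assms unfolding simple_graph_def
    by (meson Pow_iff finite_Pow_iff finite_subset subsetI)
  have "card (nb V E x) \<le> card {e \<in> E. x \<in> e}"
  proof (rule card_inj_on_le[where f = "\<lambda>y. {x, y}"])
    show "inj_on (\<lambda>y. {x, y}) (nb V E x)"
      by (rule inj_onI) (metis doubleton_eq_iff)
    show "(\<lambda>y. {x, y}) ` nb V E x \<subseteq> {e \<in> E. x \<in> e}" by (auto simp: nb_def)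
    show "finite {e \<in> E. x \<in> e}" using finE by simp
  qed
  thus ?thesis by (simp add: edeg_def)
qed

lemma Kset_sub_nb: "Kset r V E u \<subseteq> nb V E u"
  by (auto simp: Kset_def nb_def cliques_def insert_commute)

lemma Kset_empty:
  assumes "finite V" "card (nb V E u) < r - 1"
  shows "Kset r V E u = {}"
proof (rule ccontr)
  assume "Kset r V E u \<noteq> {}"
  then obtain S where S: "S \<in> cliques r V E" "u \<in> S" by (auto simp: Kset_def)
  have "card (S - {u}) \<le> card (nb V E u)"
    using clique_nb[OF S assms(1)] assms(1) by (intro card_mono) (auto simp: nb_def)
  thus False using clique_nb(2)[OF S assms(1)] assms(2) by simp
qed

lemma cdeg_del_le:
  assumes "finite V"
  shows "cdeg r (del_vert_V V u) (del_vert_E E u) x \<le> cdeg r V E x"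
  unfolding cdeg_def del_cliques
  by (rule card_mono) (use cliques_finite[OF assms] in auto)

lemma cdeg_del_eq:
  assumes "x \<in> V" "x \<noteq> u" "x \<notin> Kset r V E u"
  shows "cdeg r (del_vert_V V u) (del_vert_E E u) x = cdeg r V E x"
proof -
  have "{S \<in> {S \<in> cliques r V E. u \<notin> S}. x \<in> S} = {S \<in> cliques r V E. x \<in> S}"
    using assms by (auto simp: Kset_def)
  thus ?thesis unfolding cdeg_def del_cliques by simp
qed

lemma cnt_del_le:
  assumes "finite V"
  shows "cnt r (del_vert_V V u) (del_vert_E E u) t \<le> cnt r V E t"
  unfolding cnt_def
proof (rule card_mono)
  show "finite {x \<in> V. t \<le> cdeg r V E x}" using assms by simp
  show "{x \<in> del_vert_V V u. t \<le> cdeg r (del_vert_V V u) (del_vert_E E u) x} \<subseteq> {x \<in> V. t \<le> cdeg r V E x}"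
    using cdeg_del_le[OF assms] by (auto simp: del_vert_V_def intro: le_trans)
qed

lemma cnt_del_ge:
  assumes "finite V"
  shows "cnt r V E t \<le> cnt r (del_vert_V V u) (del_vert_E E u) t + 1 + card (Kset r V E u)"
proof -
  let ?A = "{x \<in> del_vert_V V u. t \<le> cdeg r (del_vert_V V u) (del_vert_E E u) x}"
  have fK: "finite (Kset r V E u)" using assms by (auto simp: Kset_def)
  have fA: "finite ?A" using assms by (auto simp: del_vert_V_def)
  have "{x \<in> V. t \<le> cdeg r V E x} \<subseteq> ?A \<union> ({u} \<union> Kset r V E u)"
    using cdeg_del_eq by (fastforce simp: del_vert_V_def)
  hence "cnt r V E t \<le> card (?A \<union> ({u} \<union> Kset r V E u))"
    unfolding cnt_def using fA fK by (intro card_mono) auto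
  also have "\<dots> \<le> card ?A + card ({u} \<union> Kset r V E u)" by (rule card_Un_le)
  also have "card ({u} \<union> Kset r V E u) \<le> 1 + card (Kset r V E u)"
    using card_Un_le[of "{u}" "Kset r V E u"] by simp
  finally show ?thesis by (simp add: cnt_def)
qed

lemma handshake:
  assumes "simple_graph V E"
  shows "(\<Sum>x\<in>V. edeg E x) = 2 * card E"
proof -
  have finV: "finite V" and EV: "\<And>e. e \<in> E \<Longrightarrow> e \<subseteq> V \<and> card e = 2"
    using assms by (auto simp: simple_graph_def)
  have finE: "finite E" using finV EV by (meson Pow_iff finite_Pow_iff finite_subset subsetI)
  have "(\<Sum>x\<in>V. edeg E x) = (\<Sum>x\<in>V. \<Sum>e\<in>E. if x \<in> e then 1 else 0)"
    using finE by (simp add: edeg_def sum.If_cases Int_def)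
  also have "\<dots> = (\<Sum>e\<in>E. \<Sum>x\<in>V. if x \<in> e then 1 else 0)" by (rule sum.swap)
  also have "\<dots> = (\<Sum>e\<in>E. 2)"
  proof (rule sum.cong)
    fix e assume "e \<in> E"
    hence "V \<inter> e = e" "card e = 2" using EV by auto
    thus "(\<Sum>x\<in>V. if x \<in> e then 1 else 0) = (2::nat)"
      using finV by (simp add: sum.If_cases)
  qed simp
  finally show ?thesis by simp
qed

lemma binom_top_mono:
  assumes "m \<le> n" shows "m choose k \<le> n choose k"
proof -
  have "card {B. B \<subseteq> {..<m} \<and> card B = k} \<le> card {B. B \<subseteq> {..<n} \<and> card B = k}"
    using assms by (intro card_mono) auto
  thus ?thesis by (simp add: n_subsets)
qed

lemma binom_ge:
  assumes "1 \<le> j" "j < m" shows "m \<le> m choose j"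
proof (cases "2 * j \<le> m")
  case True
  thus ?thesis using binomial_mono[of 1 j m] assms by simp
next
  case False
  have "m choose 1 \<le> m choose (m - j)"
    using binomial_mono[of 1 "m - j" m] assms False by simp
  thus ?thesis using binomial_symmetric[of j m] assms by simp
qed


lemma main_le:
  fixes d r n k :: nat
    and VG :: "'a set" and EG :: "'a set set"
    and VH :: "'b set" and EH :: "'b set set"
    and u :: "nat \<Rightarrow> 'a" and w :: "nat \<Rightarrow> 'b"
  assumes n3: "n \<ge> 3"
    and kbound: "real k \<le> (real n / 2 - 1) / (1 + real ((2 * (d + 1)) choose (r - 1))) - real d - 5"
    and G: "simple_graph VG EG" and cardG: "card VG = n"
    and H: "simple_graph VH EH" and cardH: "card VH = n"
    and degG: "avg_degree VG EG \<le> real d"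
    and u_in: "\<forall>i\<in>{1..n - k}. u i \<in> VG" and u_inj: "inj_on u {1..n - k}"
    and w_in: "\<forall>i\<in>{1..n - k}. w i \<in> VH" and w_inj: "inj_on w {1..n - k}"
    and cards: "\<forall>i\<in>{1..n - k}. graph_iso (del_vert_V VG (u i)) (del_vert_E EG (u i))
                                             (del_vert_V VH (w i)) (del_vert_E EH (w i))"
  shows "\<not> card (cliques r VH EH) < card (cliques r VG EG)"
proof
  assume lt: "card (cliques r VH EH) < card (cliques r VG EG)"
  define C where "C = (2 * (d + 1)) choose (r - 1)"
  define I where "I = {1..n - k}"
  have finG: "finite VG" using G by (simp add: simple_graph_def)
  have finH: "finite VH" using H by (simp add: simple_graph_def)
  have npos: "real n > 0" using n3 by simp
  have kb: "(1 + real C) * (real k + real d + 5) \<le> real n / 2 - 1"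
  proof -
    have "real k + real d + 5 \<le> (real n / 2 - 1) / (1 + real C)"
      using kbound unfolding C_def by linarith
    thus ?thesis by (simp add: le_divide_eq mult.commute add_pos_nonneg)
  qed
  have kb2: "real k + real C * real k + (real d + 5) + real C * (real d + 5) \<le> real n / 2 - 1"
    using kb by (simp add: algebra_simps)
  have Cnn: "0 \<le> real C * real k" "0 \<le> real C * (real d + 5)" by simp_all
  have kn: "2 * k + 12 \<le> n" using kb2 Cnn by linarith
  have cardI: "card I = n - k" by (simp add: I_def)
  have rnk: "real (n - k) = real n - real k" using kn by simp
  define N1 where "N1 = card (cliques r VG EG)"
  define N2 where "N2 = card (cliques r VH EH)"
  define \<Delta> where "\<Delta> = N1 - N2"
  have D1: "1 \<le> \<Delta>" using lt by (simp add: \<Delta>_def N1_def N2_def)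
  define cG where "cG i = cdeg r VG EG (u i)" for i
  define cH where "cH i = cdeg r VH EH (w i)" for i
  have rel: "cG i = cH i + \<Delta>" if i: "i \<in> I" for i
  proof -
    have iso: "graph_iso (del_vert_V VG (u i)) (del_vert_E EG (u i)) (del_vert_V VH (w i)) (del_vert_E EH (w i))"
      using cards i by (simp add: I_def)
    have "N1 - cG i = N2 - cH i"
      using iso_inv(1)[OF iso, of r] card_del(1)[OF finG, of r "u i" EG] card_del(1)[OF finH, of r "w i" EH]
      by (simp add: N1_def N2_def cG_def cH_def)
    moreover have "cG i \<le> N1" "cH i \<le> N2"
      using card_del(2)[OF finG] card_del(2)[OF finH] by (simp_all add: N1_def N2_def cG_def cH_def)
    ultimately show ?thesis using lt by (simp add: \<Delta>_def N1_def N2_def)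
  qed
  have oneI: "1 \<in> I" using kn by (simp add: I_def)
  have r2: "2 \<le> r"
  proof (rule ccontr)
    assume "\<not> 2 \<le> r"
    hence "r = 0 \<or> r = 1" by auto
    moreover have "u 1 \<in> VG" "w 1 \<in> VH" using u_in w_in oneI by (auto simp: I_def)
    ultimately have "cG 1 = cH 1" using cdeg_r0[OF finG] cdeg_r0[OF finH] cdeg_r1[of "u 1" VG] cdeg_r1[of "w 1" VH]
      by (auto simp: cG_def cH_def)
    thus False using rel[OF oneI] D1 by simp
  qed
  have Ebound: "real (2 * card EG) \<le> real d * real n"
    using degG npos cardG by (simp add: avg_degree_def divide_le_eq)
  have sumI: "(\<Sum>i\<in>I. edeg EG (u i)) \<le> 2 * card EG"
  proof -
    have "(\<Sum>i\<in>I. edeg EG (u i)) = (\<Sum>x\<in>u ` I. edeg EG x)"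
      using u_inj by (simp add: sum.reindex I_def)
    also have "\<dots> \<le> (\<Sum>x\<in>VG. edeg EG x)"
      using u_in finG by (intro sum_mono2) (auto simp: I_def)
    also have "\<dots> = 2 * card EG" using handshake[OF G] .
    finally show ?thesis .
  qed
  obtain i0 where i0: "i0 \<in> I" and K0: "card (Kset r VG EG (u i0)) \<le> d + 4"
  proof -
    have ex: "\<exists>i\<in>I. card (Kset r VG EG (u i)) \<le> d + 4"
    proof (cases "r - 1 \<le> 2 * d + 1")
      case True
      have "2 * d + 2 \<le> C" unfolding C_def using binom_ge[of "r - 1" "2 * (d + 1)"] True r2 by simp
      hence "real (2 * d + 2) \<le> real C" by linarith
      hence "(2 * real d + 3) * real k \<le> (1 + real C) * real k" by (intro mult_right_mono) auto
      moreover have "(1 + real C) * real k \<le> real n / 2"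
        using kb by (smt (verit, ccfv_SIG) distrib_left mult_nonneg_nonneg of_nat_0_le_iff)
      ultimately have k1: "(2 * real d + 3) * real k \<le> real n / 2" by linarith
      show ?thesis
      proof (rule ccontr)
        assume nex: "\<not> ?thesis"
        have "\<forall>i\<in>I. d + 5 \<le> edeg EG (u i)"
        proof
          fix i assume i: "i \<in> I"
          have "card (Kset r VG EG (u i)) \<le> card (nb VG EG (u i))"
            by (rule card_mono[OF _ Kset_sub_nb]) (use finG in \<open>simp add: nb_def\<close>)
          moreover have "card (nb VG EG (u i)) \<le> edeg EG (u i)" by (rule nb_le_edeg[OF G])
          moreover have "\<not> card (Kset r VG EG (u i)) \<le> d + 4" using nex i by blast
          ultimately show "d + 5 \<le> edeg EG (u i)" by linarith
        qed
        hence "(\<Sum>i\<in>I. d + 5) \<le> (\<Sum>i\<in>I. edeg EG (u i))" by (intro sum_mono) auto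
        hence "(n - k) * (d + 5) \<le> 2 * card EG" using sumI cardI by simp
        hence "real (n - k) * (real d + 5) \<le> real d * real n" using Ebound
          by (metis (no_types, opaque_lifting) of_nat_add of_nat_le_iff of_nat_mult of_nat_numeral order_trans)
        hence "5 * real n \<le> real k * (real d + 5)" using rnk by (simp add: algebra_simps)
        moreover have "real k * (real d + 5) \<le> 5 * ((2 * real d + 3) * real k)"
          by (simp add: algebra_simps)
        ultimately show False using k1 npos by linarith
      qed
    next
      case False
      show ?thesis
      proof (rule ccontr)
        assume nex: "\<not> ?thesis"
        have "\<forall>i\<in>I. 2 * d + 2 \<le> edeg EG (u i)"
        proof
          fix i assume i: "i \<in> I"
          show "2 * d + 2 \<le> edeg EG (u i)"
          proof (rule ccontr)
            assume "\<not> ?thesis"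
            hence "card (nb VG EG (u i)) < r - 1" using nb_le_edeg[OF G, of "u i"] False by linarith
            hence "Kset r VG EG (u i) = {}" using Kset_empty[OF finG] by blast
            moreover have "\<not> card (Kset r VG EG (u i)) \<le> d + 4" using nex i by blast
            ultimately show False by simp
          qed
        qed
        hence "(\<Sum>i\<in>I. 2 * d + 2) \<le> (\<Sum>i\<in>I. edeg EG (u i))" by (intro sum_mono) auto
        hence "(n - k) * (2 * d + 2) \<le> 2 * card EG" using sumI cardI by simp
        hence "real (n - k) * (2 * real d + 2) \<le> real d * real n" using Ebound
          by (metis (no_types, opaque_lifting) of_nat_add of_nat_le_iff of_nat_mult of_nat_numeral order_trans)
        hence h: "(real n - real k) * (2 * real d + 2) \<le> real d * real n" using rnk by simp
        have "(real n / 2 + 6) * (2 * real d + 2) \<le> (real n - real k) * (2 * real d + 2)"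
          using kn by (intro mult_right_mono) auto
        hence "(real n / 2 + 6) * (2 * real d + 2) \<le> real d * real n" using h by linarith
        thus False by (simp add: algebra_simps)
      qed
    qed
    thus ?thesis using that by blast
  qed
  define D where "D = card (Kset r VG EG (u i0))"
  define e where "e = k + 1 + D"
  define fG where "fG t = card {i \<in> I. t \<le> cG i}" for t
  have finI: "finite I" by (simp add: I_def)
  have step: "fG t \<le> fG (t + \<Delta>) + e" for t
  proof -
    have iso: "graph_iso (del_vert_V VG (u i0)) (del_vert_E EG (u i0)) (del_vert_V VH (w i0)) (del_vert_E EH (w i0))"
      using cards i0 by (simp add: I_def)
    have a: "fG t \<le> cnt r VG EG t"
      unfolding fG_def cnt_def
    proof (rule card_inj_on_le[where f = u])
      show "inj_on u {i \<in> I. t \<le> cG i}" using u_inj by (rule inj_on_subset) (auto simp: I_def)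
      show "u ` {i \<in> I. t \<le> cG i} \<subseteq> {x \<in> VG. t \<le> cdeg r VG EG x}"
        using u_in by (auto simp: I_def cG_def)
      show "finite {x \<in> VG. t \<le> cdeg r VG EG x}" using finG by simp
    qed
    have b: "cnt r VG EG t \<le> cnt r (del_vert_V VG (u i0)) (del_vert_E EG (u i0)) t + 1 + D"
      using cnt_del_ge[OF finG] by (simp add: D_def)
    have c: "cnt r (del_vert_V VG (u i0)) (del_vert_E EG (u i0)) t = cnt r (del_vert_V VH (w i0)) (del_vert_E EH (w i0)) t"
      by (rule iso_inv(2)[OF iso])
    have dd: "cnt r (del_vert_V VH (w i0)) (del_vert_E EH (w i0)) t \<le> cnt r VH EH t"
      by (rule cnt_del_le[OF finH])
    have fH: "{i \<in> I. t \<le> cH i} = {i \<in> I. t + \<Delta> \<le> cG i}" using rel by auto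
    have ee: "cnt r VH EH t \<le> fG (t + \<Delta>) + k"
    proof -
      have wI: "w ` I \<subseteq> VH" using w_in by (auto simp: I_def)
      have cwI: "card (w ` I) = n - k" using w_inj cardI by (simp add: card_image I_def)
      have "{y \<in> VH. t \<le> cdeg r VH EH y} \<subseteq> w ` {i \<in> I. t \<le> cH i} \<union> (VH - w ` I)"
        by (auto simp: cH_def)
      hence "cnt r VH EH t \<le> card (w ` {i \<in> I. t \<le> cH i} \<union> (VH - w ` I))"
        unfolding cnt_def using finH finI by (intro card_mono) auto
      also have "\<dots> \<le> card (w ` {i \<in> I. t \<le> cH i}) + card (VH - w ` I)" by (rule card_Un_le)
      also have "card (w ` {i \<in> I. t \<le> cH i}) \<le> card {i \<in> I. t \<le> cH i}" by (rule card_image_le) (simp add: finI)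
      also have "card (VH - w ` I) = k" using card_Diff_subset[OF finite_subset[OF wI finH] wI] cwI cardH kn by simp
      finally show ?thesis using fH by (simp add: fG_def)
    qed
    show ?thesis using a b c dd ee by (simp add: e_def)
  qed
  have f1: "fG 1 = n - k"
  proof -
    have "{i \<in> I. 1 \<le> cG i} = I" using rel D1 by fastforce
    thus ?thesis by (simp add: fG_def cardI)
  qed
  have ind: "int (n - k) \<le> int (fG (1 + j * \<Delta>)) + int j * int e" for j
  proof (induction j)
    case 0 thus ?case using f1 by simp
  next
    case (Suc j)
    have "fG (1 + j * \<Delta>) \<le> fG (1 + j * \<Delta> + \<Delta>) + e" by (rule step)
    moreover have "1 + j * \<Delta> + \<Delta> = 1 + Suc j * \<Delta>" by simp
    ultimately show ?case using Suc by (simp add: algebra_simps)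
  qed
  have mono: "fG (1 + C * \<Delta>) \<le> fG (C + 1)"
  proof -
    have "C \<le> C * \<Delta>" using D1 by simp
    thus ?thesis unfolding fG_def using finI by (intro card_mono) (auto intro: le_trans[rotated])
  qed
  define X where "X = card {x \<in> VG. 2 * d + 3 \<le> edeg EG x}"
  have up: "fG (C + 1) \<le> X"
    unfolding fG_def X_def
  proof (rule card_inj_on_le[where f = u])
    show "inj_on u {i \<in> I. C + 1 \<le> cG i}" using u_inj by (rule inj_on_subset) (auto simp: I_def)
    show "u ` {i \<in> I. C + 1 \<le> cG i} \<subseteq> {x \<in> VG. 2 * d + 3 \<le> edeg EG x}"
    proof
      fix x assume "x \<in> u ` {i \<in> I. C + 1 \<le> cG i}"
      then obtain i where i: "i \<in> I" "C + 1 \<le> cG i" and x: "x = u i" by auto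
      have xV: "x \<in> VG" using u_in i x by (simp add: I_def)
      have "2 * d + 3 \<le> edeg EG x"
      proof (rule ccontr)
        assume "\<not> ?thesis"
        hence "card (nb VG EG x) \<le> 2 * (d + 1)" using nb_le_edeg[OF G, of x] by (simp add: algebra_simps)
        hence "cdeg r VG EG x \<le> C"
          using cdeg_le_binom[OF finG, of r EG x] binom_top_mono[of "card (nb VG EG x)" "2 * (d + 1)" "r - 1"]
          unfolding C_def by linarith
        thus False using i x by (simp add: cG_def)
      qed
      thus "x \<in> {x \<in> VG. 2 * d + 3 \<le> edeg EG x}" using xV by simp
    qed
    show "finite {x \<in> VG. 2 * d + 3 \<le> edeg EG x}" using finG by simp
  qed
  have Xb: "(2 * d + 3) * X \<le> 2 * card EG"
  proof -
    have "(2 * d + 3) * X = (\<Sum>x\<in>{x \<in> VG. 2 * d + 3 \<le> edeg EG x}. 2 * d + 3)" by (simp add: X_def)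
    also have "\<dots> \<le> (\<Sum>x\<in>{x \<in> VG. 2 * d + 3 \<le> edeg EG x}. edeg EG x)" by (intro sum_mono) auto
    also have "\<dots> \<le> (\<Sum>x\<in>VG. edeg EG x)" using finG by (intro sum_mono2) auto
    also have "\<dots> = 2 * card EG" by (rule handshake[OF G])
    finally show ?thesis .
  qed
  have XbR: "(2 * real d + 3) * real X \<le> real d * real n"
  proof -
    have "real ((2 * d + 3) * X) \<le> real (2 * card EG)" using Xb by (simp only: of_nat_le_iff)
    thus ?thesis using Ebound by simp
  qed
  have main: "real n - real k \<le> real X + real C * real e"
  proof -
    have "int (n - k) \<le> int X + int C * int e"
      using ind[of C] mono up by linarith
    hence "n - k \<le> X + C * e" by (simp only: of_nat_add[symmetric] of_nat_mult[symmetric] of_nat_le_iff)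
    hence "real (n - k) \<le> real (X + C * e)" by (simp only: of_nat_le_iff)
    hence "real (n - k) \<le> real X + real C * real e" by simp
    thus ?thesis using rnk by simp
  qed
  have "real C * real e \<le> real C * (real k + real d + 5)"
    using K0 by (intro mult_left_mono) (auto simp: e_def D_def)
  hence "real C * real e \<le> real C * real k + real C * (real d + 5)" by (simp add: algebra_simps)
  hence Xlow: "real n / 2 + real d + 6 \<le> real X" using main kb2 by linarith
  have "(2 * real d + 3) * (real n / 2 + real d + 6) \<le> (2 * real d + 3) * real X"
    using Xlow by (intro mult_left_mono) auto
  hence "(2 * real d + 3) * (real n / 2 + real d + 6) \<le> real d * real n" using XbR by linarith
  moreover have "(2 * real d + 3) * (real n / 2 + real d + 6) = real d * real n + 3 / 2 * real n + (2 * real d + 3) * (real d + 6)"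
    by (simp add: algebra_simps)
  moreover have "0 \<le> (2 * real d + 3) * (real d + 6)" by simp
  ultimately show False using npos by linarith
qed


theorem theorem2p3:
  fixes d r n k :: nat
    and VG :: "'a set" and EG :: "'a set set"
    and VH :: "'b set" and EH :: "'b set set"
    and u :: "nat \<Rightarrow> 'a" and w :: "nat \<Rightarrow> 'b"
  assumes n3: "n \<ge> 3"
    and kbound: "real k \<le> (real n / 2 - 1) / (1 + real ((2 * (d + 1)) choose (r - 1))) - real d - 5"
    and G: "simple_graph VG EG" and cardG: "card VG = n"
    and H: "simple_graph VH EH" and cardH: "card VH = n"
    and degG: "avg_degree VG EG \<le> real d"
    and degH: "avg_degree VH EH \<le> real d"
    and u_in: "\<forall>i\<in>{1..n - k}. u i \<in> VG" and u_inj: "inj_on u {1..n - k}"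
    and w_in: "\<forall>i\<in>{1..n - k}. w i \<in> VH" and w_inj: "inj_on w {1..n - k}"
    and cards: "\<forall>i\<in>{1..n - k}. graph_iso (del_vert_V VG (u i)) (del_vert_E EG (u i))
                                             (del_vert_V VH (w i)) (del_vert_E EH (w i))"
  shows "card (cliques r VG EG) = card (cliques r VH EH)"
proof -
  have a: "\<not> card (cliques r VH EH) < card (cliques r VG EG)"
    by (rule main_le[OF n3 kbound G cardG H cardH degG u_in u_inj w_in w_inj cards])
  have cards': "\<forall>i\<in>{1..n - k}. graph_iso (del_vert_V VH (w i)) (del_vert_E EH (w i))
                                             (del_vert_V VG (u i)) (del_vert_E EG (u i))"
    using cards graph_iso_sym by blast
  have b: "\<not> card (cliques r VG EG) < card (cliques r VH EH)"
    by (rule main_le[OF n3 kbound H cardH G cardG degH w_in w_inj u_in u_inj cards'])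
  show ?thesis using a b by simp
qed

end
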